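(* Let $n\ge 2$ be an integer, let $A$ be a $C^*$-algebra, and let $p\in(0,1)$, $\theta\in[0,\infty)$ be real numbers. Suppose $f:A\to A$ satisfies $$\Big\|\mu f\Big(\frac{x+y}{2}\Big)+\mu f\Big(\frac{x-y}{2}\Big)-f(\mu x)+f(a^n)-\big(f(a)a^{n-1}+af(a)a^{n-2}+\cdots+a^{n-2}f(a)a+a^{n-1}f(a)\big)+f(w^* )-(f(w))^*\Big\|\le \theta(\|x\|^p+\|y\|^p+\|a\|^p+\|w\|^p)$$ for all $\mu\in\mathbb{T}$ and all $x,y,a,w\in A$. Then there exists a unique $*$-$n$-Jordan derivation $D:A\to A$ such that $$\|f(x)-D(x)\|\le \frac{2^p\theta}{2-2^p}\|x\|^p$$ for all $x\in A$.
   Context: $\mathbb{T}=\{\mu\in\mathbb{C}:|\mu|=1\}$. For an integer $n\ge 2$, an $n$-Jordan derivation on an algebra $A$ is a linear map $D:A\to A$ such that $D(a^n)=D(a)a^{n-1}+aD(a)a^{n-2}+\cdots+a^{n-2}D(a)a+a^{n-1}D(a)$ for all $a\in A$. On a $C^*$-algebra, a $*$-$n$-Jordan derivation is an $n$-Jordan derivation $D$ with $D(a^* )=(D(a))^*$ for all $a\in A$. *)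

theory Defs
  imports "HOL-Analysis.Analysis"
begin

text \<open>HOL has no complex vector space classes,
  so complex scalar multiplication is a class parameter compatible with scaleR.\<close>

class cstar_algebra = real_normed_algebra + banach +
  fixes cscale :: "complex \<Rightarrow> 'a \<Rightarrow> 'a" (infixr "*\<^sub>C" 75)
    and cstar :: "'a \<Rightarrow> 'a"
  assumes cscale_add_right: "c *\<^sub>C (x + y) = c *\<^sub>C x + c *\<^sub>C y"
    and cscale_add_left: "(b + c) *\<^sub>C x = b *\<^sub>C x + c *\<^sub>C x"
    and cscale_cscale: "b *\<^sub>C (c *\<^sub>C x) = (b * c) *\<^sub>C x"
    and cscale_one: "1 *\<^sub>C x = x"
    and scaleR_cscale: "r *\<^sub>R x = complex_of_real r *\<^sub>C x"
    and norm_cscale: "norm (c *\<^sub>C x) = cmod c * norm x"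
    and mult_cscale_left: "(c *\<^sub>C x) * y = c *\<^sub>C (x * y)"
    and mult_cscale_right: "x * (c *\<^sub>C y) = c *\<^sub>C (x * y)"
    and cstar_add: "cstar (x + y) = cstar x + cstar y"
    and cstar_cscale: "cstar (c *\<^sub>C x) = cnj c *\<^sub>C cstar x"
    and cstar_mult: "cstar (x * y) = cstar y * cstar x"
    and cstar_cstar: "cstar (cstar x) = x"
    and cstar_identity: "norm (cstar x * x) = (norm x)\<^sup>2"

text \<open>Powers without a unit: apow a n = a^n for n \<ge> 1; left/right multiplication iterates.\<close>

definition apow :: "'a::times \<Rightarrow> nat \<Rightarrow> 'a" where
  "apow a n = ((\<lambda>z. a * z) ^^ (n - 1)) a"

definition lmulpow :: "'a::times \<Rightarrow> nat \<Rightarrow> 'a \<Rightarrow> 'a" where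
  "lmulpow a k x = ((\<lambda>z. a * z) ^^ k) x"

definition rmulpow :: "'a::times \<Rightarrow> nat \<Rightarrow> 'a \<Rightarrow> 'a" where
  "rmulpow a k x = ((\<lambda>z. z * a) ^^ k) x"

definition jordan_sum :: "nat \<Rightarrow> 'a::{times,comm_monoid_add} \<Rightarrow> 'a \<Rightarrow> 'a" where
  "jordan_sum n a d = (\<Sum>i<n. lmulpow a i (rmulpow a (n - 1 - i) d))"

definition clinear_map :: "('a::cstar_algebra \<Rightarrow> 'a) \<Rightarrow> bool" where
  "clinear_map D \<longleftrightarrow> (\<forall>x y. D (x + y) = D x + D y) \<and> (\<forall>c x. D (c *\<^sub>C x) = c *\<^sub>C D x)"

definition n_jordan_derivation :: "nat \<Rightarrow> ('a::cstar_algebra \<Rightarrow> 'a) \<Rightarrow> bool" where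
  "n_jordan_derivation n D \<longleftrightarrow> clinear_map D \<and> (\<forall>a. D (apow a n) = jordan_sum n a (D a))"

definition star_n_jordan_derivation :: "nat \<Rightarrow> ('a::cstar_algebra \<Rightarrow> 'a) \<Rightarrow> bool" where
  "star_n_jordan_derivation n D \<longleftrightarrow> n_jordan_derivation n D \<and> (\<forall>a. D (cstar a) = cstar (D a))"

end

theory Submission
  imports Defs
begin


lemma cscale_zero[simp]: "c *\<^sub>C (0::'a::cstar_algebra) = 0"
  using cscale_add_right[of c "0::'a" 0] by simp

lemma cscale_diff: "c *\<^sub>C ((x::'a::cstar_algebra) - y) = c *\<^sub>C x - c *\<^sub>C y"
  using cscale_add_right[of c "x - y" y] by (simp add: algebra_simps)

lemma cscale_scaleR_comm: "c *\<^sub>C (r *\<^sub>R (x::'a::cstar_algebra)) = r *\<^sub>R (c *\<^sub>C x)"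
  by (simp add: scaleR_cscale cscale_cscale mult.commute)

lemma cscale_minus1: "(-1::complex) *\<^sub>C (x::'a::cstar_algebra) = - x"
proof -
  have "(-1::real) *\<^sub>R x = complex_of_real (-1) *\<^sub>C x" by (rule scaleR_cscale)
  then show ?thesis by simp
qed

lemma cstar_zero[simp]: "cstar (0::'a::cstar_algebra) = 0"
  using cstar_add[of "0::'a" 0] by simp

lemma cstar_diff: "cstar ((x::'a::cstar_algebra) - y) = cstar x - cstar y"
  using cstar_add[of "x - y" y] by (simp add: algebra_simps)

lemma cstar_scaleR: "cstar (r *\<^sub>R (x::'a::cstar_algebra)) = r *\<^sub>R cstar x"
  by (simp add: scaleR_cscale cstar_cscale)

lemma norm_le_cstar: "norm (x::'a::cstar_algebra) \<le> norm (cstar x)"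
proof (cases "norm x = 0")
  case True then show ?thesis by simp
next
  case False
  have "(norm x)^2 \<le> norm (cstar x) * norm x"
    using cstar_identity[of x] norm_mult_ineq[of "cstar x" x] by simp
  then have "norm x * norm x \<le> norm (cstar x) * norm x" by (simp add: power2_eq_square)
  with False show ?thesis by (simp add: mult_le_cancel_right)
qed

lemma norm_cstar: "norm (cstar (x::'a::cstar_algebra)) = norm x"
  using norm_le_cstar[of x] norm_le_cstar[of "cstar x"] by (simp add: cstar_cstar)

lemma lmulpow_0[simp]: "lmulpow a 0 x = x" by (simp add: lmulpow_def)
lemma lmulpow_Suc: "lmulpow a (Suc i) x = a * lmulpow a i x" by (simp add: lmulpow_def)
lemma rmulpow_0[simp]: "rmulpow a 0 x = x" by (simp add: rmulpow_def)
lemma rmulpow_Suc: "rmulpow a (Suc i) x = rmulpow a i x * a" by (simp add: rmulpow_def)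

lemma lmulpow_zero_right[simp]: "lmulpow (a::'a::real_normed_algebra) i 0 = 0"
  by (induct i) (simp_all add: lmulpow_Suc)
lemma rmulpow_zero_right[simp]: "rmulpow (a::'a::real_normed_algebra) i 0 = 0"
  by (induct i) (simp_all add: rmulpow_Suc)

lemma lmulpow_scaleR_arg: "lmulpow (a::'a::real_normed_algebra) i (r *\<^sub>R x) = r *\<^sub>R lmulpow a i x"
  by (induct i) (simp_all add: lmulpow_Suc)
lemma rmulpow_scaleR_arg: "rmulpow (a::'a::real_normed_algebra) i (r *\<^sub>R x) = r *\<^sub>R rmulpow a i x"
  by (induct i) (simp_all add: rmulpow_Suc)
lemma lmulpow_scaleR_base: "lmulpow (r *\<^sub>R (a::'a::real_normed_algebra)) i x = r^i *\<^sub>R lmulpow a i x"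
  by (induct i) (simp_all add: lmulpow_Suc)
lemma rmulpow_scaleR_base: "rmulpow (r *\<^sub>R (a::'a::real_normed_algebra)) i x = r^i *\<^sub>R rmulpow a i x"
  by (induct i) (simp_all add: rmulpow_Suc mult.commute)

lemma apow_lmulpow: "apow a n = lmulpow a (n - 1) a"
  by (simp add: apow_def lmulpow_def)

lemma apow_zero[simp]: "apow (0::'a::real_normed_algebra) n = 0"
  by (simp add: apow_lmulpow)

lemma apow_scaleR: "n \<ge> 1 \<Longrightarrow> apow (r *\<^sub>R (a::'a::real_normed_algebra)) n = r^n *\<^sub>R apow a n"
proof -
  assume "n \<ge> 1"
  then have "r * r^(n-1) = r^n" by (metis Suc_diff_1 less_le_trans zero_less_one power_Suc)
  then show ?thesis by (simp add: apow_lmulpow lmulpow_scaleR_base lmulpow_scaleR_arg)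
qed

lemma jordan_sum_zero[simp]: "jordan_sum n (a::'a::real_normed_algebra) 0 = 0"
  by (simp add: jordan_sum_def)

lemma jordan_sum_scaleR_arg: "jordan_sum n (a::'a::real_normed_algebra) (r *\<^sub>R d) = r *\<^sub>R jordan_sum n a d"
  by (simp add: jordan_sum_def lmulpow_scaleR_arg rmulpow_scaleR_arg scaleR_sum_right)

lemma jordan_sum_scaleR_base: "jordan_sum n (r *\<^sub>R (a::'a::real_normed_algebra)) d = r^(n-1) *\<^sub>R jordan_sum n a d"
proof -
  have "\<And>i. i \<in> {..<n} \<Longrightarrow> lmulpow (r *\<^sub>R a) i (rmulpow (r *\<^sub>R a) (n - 1 - i) d)
      = r^(n-1) *\<^sub>R lmulpow a i (rmulpow a (n - 1 - i) d)"
  proof -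
    fix i assume "i \<in> {..<n}"
    then have "i + (n - 1 - i) = n - 1" by auto
    then have "r^i * r^(n-1-i) = r^(n-1)" by (metis power_add)
    then show "lmulpow (r *\<^sub>R a) i (rmulpow (r *\<^sub>R a) (n - 1 - i) d)
      = r^(n-1) *\<^sub>R lmulpow a i (rmulpow a (n - 1 - i) d)"
      by (simp add: lmulpow_scaleR_base rmulpow_scaleR_base lmulpow_scaleR_arg mult.commute)
  qed
  then show ?thesis by (simp add: jordan_sum_def scaleR_sum_right)
qed

lemma tendsto_lmulpow: "X \<longlonglongrightarrow> l \<Longrightarrow> (\<lambda>k. lmulpow (a::'a::real_normed_algebra) i (X k)) \<longlonglongrightarrow> lmulpow a i l"
  by (induct i) (simp_all add: lmulpow_Suc tendsto_mult_left)
lemma tendsto_rmulpow: "X \<longlonglongrightarrow> l \<Longrightarrow> (\<lambda>k. rmulpow (a::'a::real_normed_algebra) i (X k)) \<longlonglongrightarrow> rmulpow a i l"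
  by (induct i) (simp_all add: rmulpow_Suc tendsto_mult_right)
lemma tendsto_jordan_sum: "X \<longlonglongrightarrow> l \<Longrightarrow> (\<lambda>k. jordan_sum n (a::'a::real_normed_algebra) (X k)) \<longlonglongrightarrow> jordan_sum n a l"
  unfolding jordan_sum_def
  by (intro tendsto_sum tendsto_lmulpow tendsto_rmulpow)

lemma lim_lip:
  fixes T :: "'a::real_normed_vector \<Rightarrow> 'b::real_normed_vector"
  assumes "\<And>y z. norm (T y - T z) \<le> L * norm (y - z)" and "X \<longlonglongrightarrow> l"
  shows "(\<lambda>k. T (X k)) \<longlonglongrightarrow> T l"
proof -
  have "(\<lambda>k. X k - l) \<longlonglongrightarrow> 0" using assms(2) by (rule LIM_zero)
  then have "(\<lambda>k. norm (X k - l)) \<longlonglongrightarrow> 0" by (rule tendsto_norm_zero)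
  then have "(\<lambda>k. L * norm (X k - l)) \<longlonglongrightarrow> 0" using tendsto_mult_left[of _ 0 _ L] by simp
  then have "(\<lambda>k. T (X k) - T l) \<longlonglongrightarrow> 0"
    by (rule Lim_null_comparison[rotated]) (simp add: assms(1))
  then show ?thesis by (rule LIM_zero_cancel)
qed

lemma geom_null:
  fixes a :: "nat \<Rightarrow> 'a::real_normed_vector"
  assumes "\<And>k. norm (a k) \<le> C * r^k" "0 \<le> r" "r < 1"
  shows "a \<longlonglongrightarrow> 0"
proof -
  have "(\<lambda>k. r^k) \<longlonglongrightarrow> 0" using assms by (intro LIMSEQ_power_zero) simp
  then have "(\<lambda>k. C * r^k) \<longlonglongrightarrow> 0" using tendsto_mult_left[of _ 0 _ C] by simp
  then show ?thesis by (rule Lim_null_comparison[rotated]) (simp add: assms(1))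
qed

lemma norm_pow2_powr:
  fixes x :: "'a::real_normed_vector"
  shows "norm (((2::real)^k) *\<^sub>R x) powr p = (2 powr p)^k * norm x powr p"
proof -
  have "((2::real)^k) powr p = (2 powr p)^k"
    by (simp add: powr_power powr_powr powr_realpow[symmetric] mult.commute)
  then show ?thesis by (simp add: powr_mult)
qed

lemma two_units:
  assumes "cmod z \<le> 2"
  shows "\<exists>m1 m2. cmod m1 = 1 \<and> cmod m2 = 1 \<and> z = m1 + m2"
proof (cases "z = 0")
  case True then show ?thesis by (intro exI[of _ 1] exI[of _ "-1"]) simp
next
  case False
  define t where "t = cmod z / 2"
  define s where "s = sqrt (1 - t^2)"
  define w where "w = z / complex_of_real (cmod z)"
  have t: "0 \<le> t" "t \<le> 1" using assms by (auto simp: t_def)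
  then have "t^2 \<le> 1" by (simp add: power_le_one)
  then have s2: "s^2 = 1 - t^2" by (simp add: s_def)
  have cw: "cmod w = 1" using False by (simp add: w_def norm_divide)
  have c1: "cmod (Complex t s) = 1" "cmod (Complex t (-s)) = 1"
    using s2 by (simp_all add: cmod_def)
  have "w * Complex t s + w * Complex t (-s) = w * complex_of_real (2*t)"
    by (simp add: distrib_left[symmetric] complex_eq_iff)
  also have "\<dots> = z" using False by (simp add: w_def t_def)
  finally show ?thesis using cw c1
    by (intro exI[of _ "w * Complex t s"] exI[of _ "w * Complex t (-s)"]) (simp add: norm_mult)
qed

lemma additive_scaleR_nat:
  assumes "\<And>x y. D (x + y) = D x + D y"
  shows "D (real m *\<^sub>R (x::'a::real_normed_vector)) = real m *\<^sub>R (D x :: 'b::real_normed_vector)"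
proof (induct m)
  case 0
  have "D 0 = D 0 + D 0" using assms[of 0 0] by simp
  then show ?case by simp
next
  case (Suc m)
  have "D (real (Suc m) *\<^sub>R x) = D (x + real m *\<^sub>R x)" by (simp add: algebra_simps)
  also have "\<dots> = D x + real m *\<^sub>R D x" using assms Suc by simp
  finally show ?case by (simp add: algebra_simps)
qed



theorem corollary2p4:
  fixes f :: "'a::cstar_algebra \<Rightarrow> 'a" and n :: nat and p \<theta> :: real
  assumes "n \<ge> 2" and "0 < p" and "p < 1" and "0 \<le> \<theta>"
    and "\<And>\<mu> x y a w. cmod \<mu> = 1 \<Longrightarrow>
      norm (\<mu> *\<^sub>C f ((1/2) *\<^sub>R (x + y)) + \<mu> *\<^sub>C f ((1/2) *\<^sub>R (x - y)) - f (\<mu> *\<^sub>C x)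
            + f (apow a n) - jordan_sum n a (f a)
            + f (cstar w) - cstar (f w))
      \<le> \<theta> * (norm x powr p + norm y powr p + norm a powr p + norm w powr p)"
  shows "\<exists>!D. star_n_jordan_derivation n D \<and>
           (\<forall>x. norm (f x - D x) \<le> (2 powr p * \<theta>) / (2 - 2 powr p) * norm x powr p)"
proof -
  note H = assms(5)
  have f0: "f 0 = 0"
  proof -
    define R where "R = f (apow 0 n) - jordan_sum n 0 (f 0) + f (cstar 0) - cstar (f 0)"
    have e1: "f 0 + f 0 - f 0 + R = 0" using H[of 1 0 0 0 0] by (simp add: cscale_one R_def algebra_simps)
    have e2: "- f 0 + - f 0 - f 0 + R = 0" using H[of "-1" 0 0 0 0] apply (simp add: cscale_minus1 R_def algebra_simps) by (metis add.right_inverse)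
    have "f 0 + f 0 + (f 0 + f 0) = (f 0 + f 0 - f 0 + R) - (- f 0 + - f 0 - f 0 + R)"
      by (simp add: algebra_simps)
    also have "\<dots> = 0" by (simp only: e1 e2 diff_zero)
    finally have "f 0 + f 0 + (f 0 + f 0) = 0" .
    then have "(2::real) *\<^sub>R ((2::real) *\<^sub>R f 0) = 0" by (simp add: scaleR_2)
    then show ?thesis by simp
  qed
  have cauchy: "norm (f u + f v - f (u + v)) \<le> \<theta> * (norm (u+v) powr p + norm (u-v) powr p)" for u v
  proof -
    have 1: "(1/2::real) *\<^sub>R ((u + v) + (u - v)) = u"
      by (simp add: scaleR_2[symmetric] algebra_simps)
    have 2: "(1/2::real) *\<^sub>R ((u + v) - (u - v)) = v"
      by (simp add: scaleR_2[symmetric] algebra_simps)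
    show ?thesis using H[of 1 "u+v" "u-v" 0 0] by (simp add: 1 2 cscale_one f0)
  qed
  have mu: "norm (\<mu> *\<^sub>C f u - f (\<mu> *\<^sub>C u)) \<le> 2 * \<theta> * norm u powr p" if "cmod \<mu> = 1" for \<mu> u
  proof -
    have 1: "(1/2::real) *\<^sub>R (u + u) = u" by (simp add: scaleR_2[symmetric])
    show ?thesis using H[of \<mu> u u 0 0] that by (simp add: 1 f0)
  qed
  have jor: "norm (f (apow a n) - jordan_sum n a (f a)) \<le> \<theta> * norm a powr p" for a
    using H[of 1 0 0 a 0] by (simp add: cscale_one f0)
  have star: "norm (f (cstar w) - cstar (f w)) \<le> \<theta> * norm w powr p" for w
    using H[of 1 0 0 0 w] by (simp add: cscale_one f0)
  have dbl: "norm (f (2 *\<^sub>R u) - 2 *\<^sub>R f u) \<le> \<theta> * 2 powr p * norm u powr p" for u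
  proof -
    have "norm (f u + f u - f (u + u)) \<le> \<theta> * (norm (u+u) powr p + norm (u-u) powr p)" by (rule cauchy)
    moreover have "norm (u+u) powr p = 2 powr p * norm u powr p"
      using norm_pow2_powr[of 1 u p] by (simp add: scaleR_2)
    moreover have "norm (f (2 *\<^sub>R u) - 2 *\<^sub>R f u) = norm (f u + f u - f (u + u))"
      by (metis norm_minus_commute scaleR_2 add_diff_cancel)
    ultimately show ?thesis by (simp add: algebra_simps)
  qed
  define r where "r = 2 powr p / 2"
  have r0: "0 < r" by (simp add: r_def)
  have "2 powr p < 2 powr 1" using assms(3) by (intro powr_less_mono) auto
  then have p2: "2 powr p < 2" by simp
  then have r1: "r < 1" by (simp add: r_def)
  define s where "s k x = inverse ((2::real)^k) *\<^sub>R f (((2::real)^k) *\<^sub>R x)" for k x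
  have rk: "inverse ((2::real)^k) * (2 powr p)^k = r^k" for k
    by (simp add: r_def power_divide field_simps)
  have bd: "norm (s (Suc k) x - s k x) \<le> (\<theta> * 2 powr p * norm x powr p / 2) * r^k" for k x
  proof -
    have "s (Suc k) x - s k x = inverse ((2::real)^Suc k) *\<^sub>R (f (2 *\<^sub>R ((2::real)^k *\<^sub>R x)) - 2 *\<^sub>R f ((2::real)^k *\<^sub>R x))"
      by (simp add: s_def algebra_simps)
    then have "norm (s (Suc k) x - s k x) = inverse ((2::real)^Suc k) * norm (f (2 *\<^sub>R ((2::real)^k *\<^sub>R x)) - 2 *\<^sub>R f ((2::real)^k *\<^sub>R x))"
      by simp
    also have "\<dots> \<le> inverse ((2::real)^Suc k) * (\<theta> * 2 powr p * norm ((2::real)^k *\<^sub>R x) powr p)"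
      by (intro mult_left_mono dbl) simp
    also have "\<dots> = (\<theta> * 2 powr p * norm x powr p / 2) * (inverse ((2::real)^k) * (2 powr p)^k)"
      unfolding norm_pow2_powr by (simp add: field_simps)
    finally show ?thesis by (simp add: rk)
  qed
  define D where "D x = f x + (\<Sum>k. s (Suc k) x - s k x)" for x
  have sumn: "summable (\<lambda>k. norm (s (Suc k) x - s k x))" for x
  proof (rule summable_comparison_test)
    show "\<exists>N. \<forall>k\<ge>N. norm (norm (s (Suc k) x - s k x)) \<le> (\<theta> * 2 powr p * norm x powr p / 2) * r^k"
      using bd by auto
    show "summable (\<lambda>k. (\<theta> * 2 powr p * norm x powr p / 2) * r^k)"
      using r0 r1 by (intro summable_mult summable_geometric) simp
  qed
  have conv: "(\<lambda>k. s k x) \<longlonglongrightarrow> D x" for x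
  proof -
    have sm: "summable (\<lambda>k. s (Suc k) x - s k x)" using sumn by (rule summable_norm_cancel)
    have eq: "s k x = f x + (\<Sum>j<k. s (Suc j) x - s j x)" for k
    proof -
      have "(\<Sum>j<k. s (Suc j) x - s j x) = s k x - s 0 x" by (rule sum_lessThan_telescope)
      moreover have "s 0 x = f x" by (simp add: s_def)
      ultimately show ?thesis by simp
    qed
    have "(\<lambda>k. s k x) = (\<lambda>k. f x + (\<Sum>j<k. s (Suc j) x - s j x))" by (rule ext) (rule eq)
    moreover have "(\<lambda>k. f x + (\<Sum>j<k. s (Suc j) x - s j x)) \<longlonglongrightarrow> D x"
      unfolding D_def by (intro tendsto_add tendsto_const summable_LIMSEQ sm)
    ultimately show ?thesis by simp
  qed
  have Dbound: "norm (f x - D x) \<le> (2 powr p * \<theta>) / (2 - 2 powr p) * norm x powr p" for x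
  proof -
    let ?C = "\<theta> * 2 powr p * norm x powr p / 2"
    have "norm (f x - D x) = norm (\<Sum>k. s (Suc k) x - s k x)" by (simp add: D_def)
    also have "\<dots> \<le> (\<Sum>k. norm (s (Suc k) x - s k x))" using sumn by (rule summable_norm)
    also have "\<dots> \<le> (\<Sum>k. ?C * r^k)"
      using sumn bd r0 r1 by (intro suminf_le summable_mult summable_geometric) auto
    also have "\<dots> = ?C * (\<Sum>k. r^k)"
      using r0 r1 by (intro suminf_mult summable_geometric) simp
    also have "\<dots> = ?C * (1 / (1 - r))"
      using r0 r1 by (subst suminf_geometric) auto
    also have "\<dots> = (2 powr p * \<theta>) / (2 - 2 powr p) * norm x powr p"
      using p2 by (simp add: r_def field_simps)
    finally show ?thesis .
  qed
  have Dunique: "D' = D" if "\<And>x k. D' (((2::real)^k) *\<^sub>R x) = ((2::real)^k) *\<^sub>R D' x"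
     and "\<And>x. norm (f x - D' x) \<le> K * norm x powr p" for D' K
  proof
    fix x
    have "(\<lambda>k. s k x - D' x) \<longlonglongrightarrow> 0"
    proof (rule geom_null)
      fix k
      have "s k x - D' x = inverse ((2::real)^k) *\<^sub>R (f (((2::real)^k) *\<^sub>R x) - D' (((2::real)^k) *\<^sub>R x))"
        by (simp add: s_def that(1) algebra_simps)
      then have "norm (s k x - D' x) = inverse ((2::real)^k) * norm (f (((2::real)^k) *\<^sub>R x) - D' (((2::real)^k) *\<^sub>R x))"
        by simp
      also have "\<dots> \<le> inverse ((2::real)^k) * (K * norm (((2::real)^k) *\<^sub>R x) powr p)"
        by (intro mult_left_mono that(2)) simp
      also have "\<dots> = (K * norm x powr p) * (inverse ((2::real)^k) * (2 powr p)^k)"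
        unfolding norm_pow2_powr by (simp add: field_simps)
      finally show "norm (s k x - D' x) \<le> (K * norm x powr p) * r^k" by (simp add: rk)
    qed (use r0 r1 in auto)
    then have "(\<lambda>k. s k x) \<longlonglongrightarrow> D' x" by (rule LIM_zero_cancel)
    then show "D' x = D x" using conv by (rule LIMSEQ_unique)
  qed
  have Dadd: "D (x + y) = D x + D y" for x y
  proof -
    have "(\<lambda>k. s k (x + y) - s k x - s k y) \<longlonglongrightarrow> 0"
    proof (rule geom_null)
      fix k
      let ?t = "(2::real)^k"
      have "s k (x + y) - s k x - s k y = - (inverse ?t *\<^sub>R (f (?t *\<^sub>R x) + f (?t *\<^sub>R y) - f (?t *\<^sub>R x + ?t *\<^sub>R y)))"
        by (simp add: s_def scaleR_add_right algebra_simps)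
      then have "norm (s k (x + y) - s k x - s k y) = inverse ?t * norm (f (?t *\<^sub>R x) + f (?t *\<^sub>R y) - f (?t *\<^sub>R x + ?t *\<^sub>R y))"
        by simp
      also have "\<dots> \<le> inverse ?t * (\<theta> * (norm (?t *\<^sub>R x + ?t *\<^sub>R y) powr p + norm (?t *\<^sub>R x - ?t *\<^sub>R y) powr p))"
        by (intro mult_left_mono cauchy) simp
      also have "\<dots> = (\<theta> * (norm (x + y) powr p + norm (x - y) powr p)) * (inverse ?t * (2 powr p)^k)"
        unfolding scaleR_add_right[symmetric] scaleR_diff_right[symmetric] norm_pow2_powr
        by (simp add: field_simps)
      finally show "norm (s k (x + y) - s k x - s k y) \<le> (\<theta> * (norm (x + y) powr p + norm (x - y) powr p)) * r^k"
        by (simp add: rk)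
    qed (use r0 r1 in auto)
    moreover have "(\<lambda>k. s k (x + y) - s k x - s k y) \<longlonglongrightarrow> D (x + y) - D x - D y"
      by (intro tendsto_diff conv)
    ultimately have "D (x + y) - D x - D y = 0" using LIMSEQ_unique by blast
    then show ?thesis by (simp add: algebra_simps)
  qed
  have Dmu: "D (\<mu> *\<^sub>C x) = \<mu> *\<^sub>C D x" if um: "cmod \<mu> = 1" for \<mu> x
  proof -
    have "(\<lambda>k. s k (\<mu> *\<^sub>C x) - \<mu> *\<^sub>C s k x) \<longlonglongrightarrow> 0"
    proof (rule geom_null)
      fix k
      let ?t = "(2::real)^k"
      have "s k (\<mu> *\<^sub>C x) - \<mu> *\<^sub>C s k x = - (inverse ?t *\<^sub>R (\<mu> *\<^sub>C f (?t *\<^sub>R x) - f (\<mu> *\<^sub>C (?t *\<^sub>R x))))"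
        by (simp add: s_def cscale_scaleR_comm algebra_simps)
      then have "norm (s k (\<mu> *\<^sub>C x) - \<mu> *\<^sub>C s k x) = inverse ?t * norm (\<mu> *\<^sub>C f (?t *\<^sub>R x) - f (\<mu> *\<^sub>C (?t *\<^sub>R x)))"
        by simp
      also have "\<dots> \<le> inverse ?t * (2 * \<theta> * norm (?t *\<^sub>R x) powr p)"
        by (intro mult_left_mono mu um) simp
      also have "\<dots> = (2 * \<theta> * norm x powr p) * (inverse ?t * (2 powr p)^k)"
        unfolding norm_pow2_powr by (simp add: field_simps)
      finally show "norm (s k (\<mu> *\<^sub>C x) - \<mu> *\<^sub>C s k x) \<le> (2 * \<theta> * norm x powr p) * r^k"
        by (simp add: rk)
    qed (use r0 r1 in auto)
    moreover have "(\<lambda>k. \<mu> *\<^sub>C s k x) \<longlonglongrightarrow> \<mu> *\<^sub>C D x"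
    proof -
      have "norm (\<mu> *\<^sub>C y - \<mu> *\<^sub>C z) \<le> cmod \<mu> * norm (y - z)" for y z :: 'a
        by (simp add: cscale_diff[symmetric] norm_cscale)
      then show ?thesis using lim_lip[of "\<lambda>y. \<mu> *\<^sub>C y" "cmod \<mu>" "\<lambda>k. s k x" "D x"] conv by blast
    qed
    ultimately have "(\<lambda>k. s k (\<mu> *\<^sub>C x) - \<mu> *\<^sub>C s k x) \<longlonglongrightarrow> D (\<mu> *\<^sub>C x) - \<mu> *\<^sub>C D x"
      using conv by (intro tendsto_diff) auto
    moreover note \<open>(\<lambda>k. s k (\<mu> *\<^sub>C x) - \<mu> *\<^sub>C s k x) \<longlonglongrightarrow> 0\<close>
    ultimately have "D (\<mu> *\<^sub>C x) - \<mu> *\<^sub>C D x = 0" using LIMSEQ_unique by blast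
    then show ?thesis by simp
  qed
  have Dlin: "clinear_map D"
    unfolding clinear_map_def
  proof (intro conjI allI)
    show "D (x + y) = D x + D y" for x y by (rule Dadd)
    fix c x
    obtain M :: nat where M: "cmod c / 2 \<le> real M" "1 \<le> M"
      by (metis real_arch_simple max.cobounded1 max.cobounded2 order_trans of_nat_le_iff nat_le_real_less
          one_le_numeral)
    define z where "z = c / of_nat M"
    have Mz: "of_nat M * z = c" using M by (simp add: z_def)
    have "cmod z = cmod c / real M" by (simp add: z_def norm_divide)
    also have "\<dots> \<le> 2" using M by (simp add: divide_le_eq mult.commute)
    finally obtain m1 m2 where m: "cmod m1 = 1" "cmod m2 = 1" "z = m1 + m2"
      using two_units by blast
    have Dz: "D (z *\<^sub>C y) = z *\<^sub>C D y" for y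
    proof -
      have "D (z *\<^sub>C y) = D (m1 *\<^sub>C y + m2 *\<^sub>C y)" by (simp add: m(3) cscale_add_left)
      also have "\<dots> = m1 *\<^sub>C D y + m2 *\<^sub>C D y" using Dadd Dmu m by simp
      also have "\<dots> = z *\<^sub>C D y" by (simp add: m(3) cscale_add_left)
      finally show ?thesis .
    qed
    have natc: "of_nat M *\<^sub>C y = real M *\<^sub>R y" for y :: 'a
      by (simp add: scaleR_cscale)
    have "D (c *\<^sub>C x) = D (of_nat M *\<^sub>C (z *\<^sub>C x))" by (simp add: cscale_cscale Mz)
    also have "\<dots> = real M *\<^sub>R D (z *\<^sub>C x)" unfolding natc by (rule additive_scaleR_nat[OF Dadd])
    also have "\<dots> = of_nat M *\<^sub>C (z *\<^sub>C D x)" by (simp add: Dz natc)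
    also have "\<dots> = c *\<^sub>C D x" by (simp add: cscale_cscale Mz)
    finally show "D (c *\<^sub>C x) = c *\<^sub>C D x" .
  qed
  have n1: "n \<ge> 1" using assms(1) by simp
  have Djor: "D (apow a n) = jordan_sum n a (D a)" for a
  proof -
    let ?y = "apow a n"
    have sm: "strict_mono (\<lambda>k. n * k)" using n1 by (simp add: strict_mono_def)
    have c1: "(\<lambda>k. s (n * k) ?y) \<longlonglongrightarrow> D ?y"
      using LIMSEQ_subseq_LIMSEQ[OF conv sm] by (simp add: o_def)
    have c2: "(\<lambda>k. jordan_sum n a (s k a)) \<longlonglongrightarrow> jordan_sum n a (D a)"
      by (intro tendsto_jordan_sum conv)
    have "(\<lambda>k. s (n * k) ?y - jordan_sum n a (s k a)) \<longlonglongrightarrow> 0"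
    proof (rule geom_null)
      fix k
      let ?t = "(2::real)^k"
      have tpos: "?t > 0" by simp
      have "s (n * k) ?y = inverse (?t^n) *\<^sub>R f (apow (?t *\<^sub>R a) n)"
        by (simp add: s_def apow_scaleR[OF n1] power_mult mult.commute)
      moreover have "jordan_sum n a (s k a) = inverse (?t^n) *\<^sub>R jordan_sum n (?t *\<^sub>R a) (f (?t *\<^sub>R a))"
      proof -
        have "?t ^ n = ?t * ?t ^ (n - 1)" using n1 by (metis Suc_diff_1 less_le_trans zero_less_one power_Suc)
        then have "inverse (?t^n) * ?t ^ (n - 1) = inverse ?t" by (simp add: field_simps)
        then show ?thesis by (simp add: s_def jordan_sum_scaleR_arg jordan_sum_scaleR_base)
      qed
      ultimately have "s (n * k) ?y - jordan_sum n a (s k a)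
          = inverse (?t^n) *\<^sub>R (f (apow (?t *\<^sub>R a) n) - jordan_sum n (?t *\<^sub>R a) (f (?t *\<^sub>R a)))"
        by (simp add: scaleR_diff_right)
      then have "norm (s (n * k) ?y - jordan_sum n a (s k a))
          = inverse (?t^n) * norm (f (apow (?t *\<^sub>R a) n) - jordan_sum n (?t *\<^sub>R a) (f (?t *\<^sub>R a)))"
        by simp
      also have "\<dots> \<le> inverse (?t^n) * (\<theta> * norm (?t *\<^sub>R a) powr p)"
        by (intro mult_left_mono jor) simp
      also have "\<dots> = (\<theta> * norm a powr p) * (2 powr p)^k * inverse (?t^n)"
        unfolding norm_pow2_powr by (simp add: field_simps)
      also have "\<dots> \<le> (\<theta> * norm a powr p) * (2 powr p)^k * inverse ?t"
      proof (intro mult_left_mono)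
        have "?t ^ 1 \<le> ?t ^ n" using n1 by (intro power_increasing) simp_all
        then show "inverse (?t^n) \<le> inverse ?t" using tpos by (intro le_imp_inverse_le) simp_all
      qed (use assms(4) in simp_all)
      also have "\<dots> = (\<theta> * norm a powr p) * r^k" using rk[of k] by (simp add: field_simps)
      finally show "norm (s (n * k) ?y - jordan_sum n a (s k a)) \<le> (\<theta> * norm a powr p) * r^k" .
    qed (use r0 r1 in auto)
    moreover have "(\<lambda>k. s (n * k) ?y - jordan_sum n a (s k a)) \<longlonglongrightarrow> D ?y - jordan_sum n a (D a)"
      using c1 c2 by (rule tendsto_diff)
    ultimately have "D ?y - jordan_sum n a (D a) = 0" using LIMSEQ_unique by blast
    then show ?thesis by simp
  qed
  have Dstar: "D (cstar w) = cstar (D w)" for w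
  proof -
    have "(\<lambda>k. s k (cstar w) - cstar (s k w)) \<longlonglongrightarrow> 0"
    proof (rule geom_null)
      fix k
      let ?t = "(2::real)^k"
      have "s k (cstar w) - cstar (s k w) = inverse ?t *\<^sub>R (f (cstar (?t *\<^sub>R w)) - cstar (f (?t *\<^sub>R w)))"
        by (simp add: s_def cstar_scaleR scaleR_diff_right)
      then have "norm (s k (cstar w) - cstar (s k w)) = inverse ?t * norm (f (cstar (?t *\<^sub>R w)) - cstar (f (?t *\<^sub>R w)))"
        by simp
      also have "\<dots> \<le> inverse ?t * (\<theta> * norm (?t *\<^sub>R w) powr p)"
        by (intro mult_left_mono star) simp
      also have "\<dots> = (\<theta> * norm w powr p) * (inverse ?t * (2 powr p)^k)"
        unfolding norm_pow2_powr by (simp add: field_simps)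
      finally show "norm (s k (cstar w) - cstar (s k w)) \<le> (\<theta> * norm w powr p) * r^k"
        by (simp add: rk)
    qed (use r0 r1 in auto)
    moreover have "(\<lambda>k. cstar (s k w)) \<longlonglongrightarrow> cstar (D w)"
    proof -
      have "norm (cstar y - cstar z) \<le> 1 * norm (y - z)" for y z :: 'a
        by (simp add: cstar_diff[symmetric] norm_cstar)
      then show ?thesis using lim_lip[of cstar 1 "\<lambda>k. s k w" "D w"] conv by blast
    qed
    ultimately have "(\<lambda>k. s k (cstar w) - cstar (s k w)) \<longlonglongrightarrow> D (cstar w) - cstar (D w)"
      using conv by (intro tendsto_diff) auto
    moreover note \<open>(\<lambda>k. s k (cstar w) - cstar (s k w)) \<longlonglongrightarrow> 0\<close>
    ultimately have "D (cstar w) - cstar (D w) = 0" using LIMSEQ_unique by blast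
    then show ?thesis by simp
  qed
  have Dgood: "star_n_jordan_derivation n D \<and>
           (\<forall>x. norm (f x - D x) \<le> (2 powr p * \<theta>) / (2 - 2 powr p) * norm x powr p)"
    using Dlin Djor Dstar Dbound by (simp add: star_n_jordan_derivation_def n_jordan_derivation_def)
  show ?thesis
  proof (rule ex1I[of _ D])
    show "star_n_jordan_derivation n D \<and>
           (\<forall>x. norm (f x - D x) \<le> (2 powr p * \<theta>) / (2 - 2 powr p) * norm x powr p)" by (rule Dgood)
  next
    fix D' assume D': "star_n_jordan_derivation n D' \<and>
           (\<forall>x. norm (f x - D' x) \<le> (2 powr p * \<theta>) / (2 - 2 powr p) * norm x powr p)"
    then have lin: "clinear_map D'" by (simp add: star_n_jordan_derivation_def n_jordan_derivation_def)
    show "D' = D"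
    proof (rule Dunique)
      show "D' (((2::real)^k) *\<^sub>R x) = ((2::real)^k) *\<^sub>R D' x" for x k
        using lin by (simp add: clinear_map_def scaleR_cscale)
      show "norm (f x - D' x) \<le> (2 powr p * \<theta>) / (2 - 2 powr p) * norm x powr p" for x
        using D' by blast
    qed
  qed
qed
end
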